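(* Let $n\in\mathbb{N}$ and let $n=2^{\alpha_1}-2^{\alpha_2}+\cdots+(-1)^{\ell-1}2^{\alpha_\ell}$ be an alternating binary representation of $n$. Then $c(n)=\ell$ if $n$ is odd (i.e. $\alpha_\ell=0$), and $c(n)=\ell+1$ if $n$ is even (i.e. $\alpha_\ell\ge1$). Consequently $h(n)=\ell-1$ if $n$ is odd and $h(n)=\ell$ if $n$ is even.
   Context: An alternating binary representation (ABR) of $n\in\mathbb{N}$ is an expression $n=\sum_{i=1}^{\ell}(-1)^{i-1}2^{\alpha_i}$ with $\ell\ge1$ and nonnegative integers $\alpha_1>\alpha_2>\cdots>\alpha_{\ell-1}>\alpha_\ell+1$ (every $n$ has one, obtained from its binary expansion by rewriting maximal blocks of 1s as differences of powers of two, except a final isolated 1). For $i\in\mathbb{N}$, $m\in\mathbb{N}_0$ let $d_i(m)=2^{i-1}-|(m\bmod 2^i)-2^{i-1}|$, and let $c(n)$ be the number of distinct values in $\{d_i(n):i\in\mathbb{N}\}$. For $k\ge0$, $0\le m<2^k$ let $\beta_k(m)\in\{0,1\}^k$ have $j$-th coordinate equal to the binary digit of $m$ of weight $2^{k-j}$. For $n\ge2$, $k=\lceil\log_2 n\rceil$, a pair $(n_0,n_1)$ with $n=n_0+n_1$, $n_0\ge n_1\ge1$ is a hypercubic bipartition (HCBP) of $n$ if for some $i\in\{1,\dots,k\}$ the hyperplane $x_i=1/2$ splits $\beta_k(0),\dots,\beta_k(n-1)$ into $n_0$ points on one side and $n_1$ on the other. For $n\ge 2$, $h(n)$ is the number of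 HCBPs of $n$, and $h(1)=0$. *)

theory Defs
  imports Complex_Main
begin

definition is_ABR :: "nat \<Rightarrow> nat \<Rightarrow> (nat \<Rightarrow> nat) \<Rightarrow> bool" where
  "is_ABR n l a \<longleftrightarrow> l \<ge> 1
     \<and> (\<forall>i. 1 \<le> i \<and> i + 1 < l \<longrightarrow> a (i + 1) < a i)
     \<and> (l \<ge> 2 \<longrightarrow> a l + 1 < a (l - 1))
     \<and> int n = (\<Sum>i = 1..l. (-1) ^ (i - 1) * 2 ^ (a i))"

definition d :: "nat \<Rightarrow> nat \<Rightarrow> int" where
  "d i m = 2 ^ (i - 1) - \<bar>int (m mod 2 ^ i) - 2 ^ (i - 1)\<bar>"

definition c :: "nat \<Rightarrow> nat" where
  "c n = card {d i n | i. i \<ge> 1}"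

text \<open>beta k m as a list of length k; its j-th coordinate (list index j-1) is the binary
  digit of m of weight 2^(k-j).\<close>
definition beta :: "nat \<Rightarrow> nat \<Rightarrow> nat list" where
  "beta k m = map (\<lambda>j. m div 2 ^ (k - j) mod 2) [1..<k + 1]"

definition kdim :: "nat \<Rightarrow> nat" where
  "kdim n = nat \<lceil>log 2 (real n)\<rceil>"

definition is_HCBP :: "nat \<Rightarrow> nat \<times> nat \<Rightarrow> bool" where
  "is_HCBP n p \<longleftrightarrow> (case p of (n0, n1) \<Rightarrow>
     n = n0 + n1 \<and> n0 \<ge> n1 \<and> n1 \<ge> 1 \<and>
     (\<exists>i \<in> {1..kdim n}.
        (let A = card {m. m < n \<and> beta (kdim n) m ! (i - 1) = 0};
             B = card {m. m < n \<and> beta (kdim n) m ! (i - 1) = 1}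
         in (n0 = A \<and> n1 = B) \<or> (n0 = B \<and> n1 = A))))"

definition h :: "nat \<Rightarrow> nat" where
  "h n = (if n \<ge> 2 then card {p. is_HCBP n p} else 0)"

end

theory Submission
  imports Defs "HOL-Library.Log_Nat"
begin

definition dd :: "nat \<Rightarrow> int \<Rightarrow> int" where
  "dd i x = 2 ^ (i - 1) - \<bar>x mod 2 ^ i - 2 ^ (i - 1)\<bar>"

definition Sd :: "int \<Rightarrow> int set" where
  "Sd x = {dd i x | i. i \<ge> 1}"

lemma d_dd: "d i m = dd i (int m)"
  unfolding d_def dd_def by (simp add: zmod_int)

lemma c_Sd: "c n = card (Sd (int n))"
  unfolding c_def Sd_def by (simp add: d_dd)

lemma pow_split: "i \<ge> 1 \<Longrightarrow> (2::int) ^ i = 2 * 2 ^ (i - 1)"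
  by (metis Suc_diff_1 less_le_trans zero_less_one power_Suc)

lemma dd_nonneg: "i \<ge> 1 \<Longrightarrow> 0 \<le> dd i x"
proof -
  assume i: "i \<ge> 1"
  have "0 \<le> x mod 2 ^ i" "x mod 2 ^ i < 2 ^ i" by simp_all
  then show ?thesis using pow_split[OF i] unfolding dd_def by linarith
qed

lemma dd_le: "0 \<le> x \<Longrightarrow> dd i x \<le> x"
proof -
  assume x: "0 \<le> x"
  have "x mod 2 ^ i \<le> x" using x by (simp add: zmod_le_nonneg_dividend)
  then show ?thesis unfolding dd_def by linarith
qed

lemma dd_small: "0 \<le> x \<Longrightarrow> x \<le> 2 ^ (i - 1) \<Longrightarrow> i \<ge> 1 \<Longrightarrow> dd i x = x"
proof -
  assume x: "0 \<le> x" "x \<le> 2 ^ (i - 1)" and i: "i \<ge> 1"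
  have "(0::int) < 2 ^ (i - 1)" by simp
  then have "x < 2 ^ i" using x pow_split[OF i] by linarith
  then have "x mod 2 ^ i = x" using x by simp
  then show ?thesis unfolding dd_def using x by simp
qed

lemma dd_refl: "i \<ge> 1 \<Longrightarrow> i \<le> a \<Longrightarrow> dd i (2 ^ a - x) = dd i x"
proof -
  assume i: "i \<ge> 1" and ia: "i \<le> a"
  have dv: "(2::int) ^ i dvd 2 ^ a" using ia by (simp add: le_imp_power_dvd)
  have "(2 ^ a - x) mod 2 ^ i = (- x) mod 2 ^ i"
    using dv by (metis diff_0 mod_0_imp_dvd dvd_imp_mod_0 mod_diff_left_eq)
  also have "\<dots> = (if x mod 2 ^ i = 0 then 0 else 2 ^ i - x mod 2 ^ i)"
    by (simp add: zmod_zminus1_eq_if)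
  finally have e: "(2 ^ a - x) mod 2 ^ i = (if x mod 2 ^ i = 0 then 0 else 2 ^ i - x mod 2 ^ i)" .
  show ?thesis unfolding dd_def e using pow_split[OF i] by auto
qed

lemma dd_pow: "i \<ge> 1 \<Longrightarrow> i \<le> a \<Longrightarrow> dd i (2 ^ a) = 0"
  using dd_refl[of i a 0] by (simp add: dd_def)

lemma Sd_fin: "0 \<le> x \<Longrightarrow> finite (Sd x) \<and> (\<forall>y\<in>Sd x. y \<le> x)"
proof -
  assume x: "0 \<le> x"
  have "Sd x \<subseteq> {0..x}" unfolding Sd_def using dd_nonneg dd_le[OF x] by auto
  then show ?thesis by (meson atLeastAtMost_iff finite_atLeastAtMost_int finite_subset subsetD)
qed

definition abr :: "nat \<Rightarrow> (nat \<Rightarrow> nat) \<Rightarrow> bool" where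
  "abr l a \<longleftrightarrow> (\<forall>i. 1 \<le> i \<and> i + 1 < l \<longrightarrow> a (i + 1) < a i)
     \<and> (l \<ge> 2 \<longrightarrow> a l + 1 < a (l - 1))"

definition vl :: "nat \<Rightarrow> (nat \<Rightarrow> nat) \<Rightarrow> int" where
  "vl l a = (\<Sum>i = 1..l. (-1) ^ (i - 1) * 2 ^ (a i))"

lemma sum_split1: "(\<Sum>i = 1..Suc k. f i) = f 1 + (\<Sum>i = 1..k. f (Suc i))"
  by (induction k) (auto simp: add.assoc)

lemma vl_step: "vl (Suc (Suc m)) a = 2 ^ a 1 - vl (Suc m) (\<lambda>i. a (Suc i))"
proof -
  have "vl (Suc (Suc m)) a = 2 ^ a 1 + (\<Sum>i = 1..Suc m. (-1) ^ (Suc i - 1) * 2 ^ (a (Suc i)))"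
    unfolding vl_def by (subst sum_split1) simp
  also have "(\<Sum>i = 1..Suc m. (-1) ^ (Suc i - 1) * 2 ^ (a (Suc i))) =
     (\<Sum>i = 1..Suc m. - ((-1) ^ (i - 1) * (2::int) ^ (a (Suc i))))"
  proof (rule sum.cong)
    fix i assume "i \<in> {1..Suc m}"
    then have "i = Suc (i - 1)" by auto
    then show "(-1) ^ (Suc i - 1) * 2 ^ (a (Suc i)) = - ((-1) ^ (i - 1) * (2::int) ^ (a (Suc i)))"
      by (metis diff_Suc_1 mult_minus1 mult_minus_left power_Suc)
  qed simp
  finally show ?thesis unfolding vl_def by (simp add: sum_negf)
qed

lemma abr_shift: "abr (Suc (Suc m)) a \<Longrightarrow> abr (Suc m) (\<lambda>i. a (Suc i))"
  unfolding abr_def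
  apply (intro conjI allI impI)
   apply (metis Suc_eq_plus1 Suc_less_eq add_2_eq_Suc' le_add1 le_add_same_cancel1 add.commute)
  apply (cases m) apply simp
  apply simp
  done

lemma abr_12: "abr (Suc (Suc m)) a \<Longrightarrow> a 2 < a 1 \<and> (m = 0 \<longrightarrow> a 2 + 1 < a 1)"
  unfolding abr_def by (cases m) (auto simp: numeral_2_eq_2)

lemma Sd_mem: "i \<ge> 1 \<Longrightarrow> dd i x \<in> Sd x"
  unfolding Sd_def by blast

lemma Sd_pow: "Sd (2 ^ a) = (if a = 0 then {1} else {0, 2 ^ a})"
proof (cases "a = 0")
  case True
  have "dd i 1 = 1" if "i \<ge> 1" for i using dd_small[of 1 i] that by simp
  then show ?thesis using True unfolding Sd_def by (auto intro!: exI[of _ 1])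
next
  case False
  have "dd i (2 ^ a) \<in> {0, 2 ^ a}" if "i \<ge> 1" for i
  proof (cases "i \<le> a")
    case True then show ?thesis using dd_pow that by auto
  next
    case F: False
    have "(2::int) ^ a \<le> 2 ^ (i - 1)" using F by (intro power_increasing) auto
    then show ?thesis using dd_small[of "2^a" i] that by simp
  qed
  moreover have "dd 1 (2 ^ a) = 0" using dd_pow[of 1 a] False by simp
  moreover have "dd (Suc a) (2 ^ a) = 2 ^ a" using dd_small[of "2^a" "Suc a"] by simp
  ultimately have "Sd (2 ^ a) = {0, 2 ^ a}"
    using Sd_mem[of 1 "2^a"] Sd_mem[of "Suc a" "2^a"] unfolding Sd_def[of "2^a"] by auto
  then show ?thesis using False by simp
qed

lemma card_Sd_pow: "card (Sd (2 ^ a)) = (if a = 0 then 1 else 2)"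
  by (simp add: Sd_pow)

lemma Sd_step:
  assumes p: "0 < w" "w \<le> 2 ^ b" "b < a" "2 * w < 2 ^ a"
  shows "card (Sd (2 ^ a - w)) = Suc (card (Sd w))"
proof -
  define v where "v = 2 ^ a - w"
  have v0: "0 \<le> v" "v \<le> 2 ^ a" using p unfolding v_def by auto
  have wv: "w < v" using p unfolding v_def by auto
  have "Sd v = insert v (Sd w)"
  proof (intro equalityI subsetI)
    fix y assume "y \<in> Sd v"
    then obtain i where i: "i \<ge> 1" "y = dd i v" unfolding Sd_def by auto
    show "y \<in> insert v (Sd w)"
    proof (cases "i \<le> a")
      case True
      then have "y = dd i w" using i dd_refl unfolding v_def by auto
      then show ?thesis using i unfolding Sd_def by auto
    next
      case False
      have "(2::int) ^ a \<le> 2 ^ (i - 1)" using False by (intro power_increasing) auto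
      then have "v \<le> 2 ^ (i - 1)" using v0 by linarith
      then have "y = v" using i dd_small[of v i] v0 by simp
      then show ?thesis by simp
    qed
  next
    fix y assume "y \<in> insert v (Sd w)"
    then consider "y = v" | "y \<in> Sd w" by auto
    then show "y \<in> Sd v"
    proof cases
      case 1
      have "dd (Suc a) v = v" using dd_small[of v "Suc a"] v0 by simp
      then show ?thesis using 1 Sd_mem[of "Suc a" v] by simp
    next
      case 2
      then obtain i where i: "i \<ge> 1" "y = dd i w" unfolding Sd_def by auto
      show ?thesis
      proof (cases "i \<le> a")
        case True
        then have "y = dd i v" using i dd_refl unfolding v_def by auto
        then show ?thesis using i unfolding Sd_def by auto
      next
        case False
        have "(2::int) ^ b \<le> 2 ^ (i - 1)" using False p by (intro power_increasing) auto
        then have "w \<le> 2 ^ (i - 1)" using p by linarith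
        then have "y = w" using i dd_small[of w i] p by simp
        also have "w = dd (Suc b) w" using dd_small[of w "Suc b"] p by simp
        also have "\<dots> = dd (Suc b) v" using dd_refl[of "Suc b" a w] p unfolding v_def by simp
        finally show ?thesis using Sd_mem[of "Suc b" v] by simp
      qed
    qed
  qed
  moreover have "v \<notin> Sd w" using Sd_fin[of w] p wv by force
  moreover have "finite (Sd w)" using Sd_fin[of w] p by simp
  ultimately show ?thesis unfolding v_def by simp
qed

lemma main:
  "abr (Suc m) a \<Longrightarrow> 0 < vl (Suc m) a \<and> vl (Suc m) a \<le> 2 ^ (a 1)
     \<and> (m \<ge> 1 \<longrightarrow> vl (Suc m) a < 2 ^ (a 1))
     \<and> (even (vl (Suc m) a) \<longleftrightarrow> a (Suc m) \<ge> 1)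
     \<and> card (Sd (vl (Suc m) a)) = (if a (Suc m) = 0 then Suc m else Suc (Suc m))"
proof (induction m arbitrary: a)
  case 0
  have "vl (Suc 0) a = 2 ^ (a 1)" unfolding vl_def by simp
  then show ?case using card_Sd_pow[of "a 1"] by (simp add: Suc_le_eq)
next
  case (Suc m)
  define b where "b = (\<lambda>i. a (Suc i))"
  define w where "w = vl (Suc m) b"
  have ab: "abr (Suc m) b" using abr_shift[OF Suc.prems] unfolding b_def .
  note IH = Suc.IH[OF ab, folded w_def]
  have a12: "a 2 < a 1" "m = 0 \<longrightarrow> a 2 + 1 < a 1" using abr_12[OF Suc.prems] by auto
  have b1: "b 1 = a 2" unfolding b_def by (simp add: numeral_2_eq_2)
  have bl: "b (Suc m) = a (Suc (Suc m))" unfolding b_def by simp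
  have v: "vl (Suc (Suc m)) a = 2 ^ a 1 - w" unfolding w_def b_def by (rule vl_step)
  have w0: "0 < w" "w \<le> 2 ^ a 2" using IH b1 by auto
  have w2: "2 * w < 2 ^ a 1"
  proof (cases "m = 0")
    case True
    have "(2::int) ^ (a 2 + 1) < 2 ^ a 1" using a12 True by (intro power_strict_increasing) auto
    then show ?thesis using w0 by simp
  next
    case False
    have "w < 2 ^ a 2" using IH b1 False by auto
    moreover have "(2::int) ^ (a 2 + 1) \<le> 2 ^ a 1" using a12 by (intro power_increasing) auto
    ultimately show ?thesis by simp
  qed
  have card: "card (Sd (2 ^ a 1 - w)) = Suc (card (Sd w))" by (rule Sd_step[OF w0 a12(1) w2])
  have ev: "even (2 ^ a 1 - w) \<longleftrightarrow> even w" using a12 by (cases "a 1") auto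
  have pos: "0 < 2 ^ a 1 - w" using w2 w0 by linarith
  show ?case unfolding v using IH card ev pos w0 bl by auto
qed

lemma bit_r: "(N::nat) div 2 ^ j mod 2 = (N mod 2 ^ Suc j) div 2 ^ j"
  by (metis Nat.add_0_right add_Suc_right div_exp_mod_exp_eq power_Suc0_right)

lemma d_step: "d (Suc j) (Suc N) = d (Suc j) N + (if N div 2 ^ j mod 2 = 0 then 1 else -1)"
proof -
  define r where "r = N mod 2 ^ Suc j"
  define P :: nat where "P = 2 ^ j"
  have iP: "int P = 2 ^ j" unfolding P_def by simp
  have P2: "(2::nat) ^ Suc j = 2 * P" unfolding P_def by simp
  have rl: "r < 2 * P" unfolding r_def P2[symmetric] by simp
  have b: "N div 2 ^ j mod 2 = 0 \<longleftrightarrow> r < P" unfolding bit_r r_def[symmetric] P_def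
    by (simp add: div_eq_0_iff)
  have s: "Suc N mod 2 ^ Suc j = (if Suc r = 2 * P then 0 else Suc r)" unfolding r_def P2[symmetric] by (rule mod_Suc)
  have dN: "d (Suc j) N = int P - \<bar>int r - int P\<bar>" unfolding d_def r_def iP by simp
  have dS: "d (Suc j) (Suc N) = int P - \<bar>int (if Suc r = 2 * P then 0 else Suc r) - int P\<bar>"
    unfolding d_def s iP by simp
  show ?thesis
  proof (cases "Suc r = 2 * P")
    case True
    then have "d (Suc j) (Suc N) = int P - \<bar>0 - int P\<bar>" using dS by simp
    moreover have "\<not> r < P" "int r + 1 = 2 * int P" using True by linarith+
    ultimately show ?thesis using b dN by simp
  next
    case False
    have dS': "d (Suc j) (Suc N) = int P - \<bar>int r + 1 - int P\<bar>" using dS False by simp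
    show ?thesis
    proof (cases "r < P")
      case True
      then have "\<bar>int r + 1 - int P\<bar> = int P - int r - 1" "\<bar>int r - int P\<bar> = int P - int r" by linarith+
      then show ?thesis using b True unfolding dN dS' by simp
    next
      case F: False
      then have "\<bar>int r + 1 - int P\<bar> = int r + 1 - int P" "\<bar>int r - int P\<bar> = int r - int P" by linarith+
      then show ?thesis using b F unfolding dN dS' by simp
    qed
  qed
qed

lemma card_suc: "card {m. m < Suc N \<and> Q m} = card {m. m < N \<and> Q m} + (if Q N then 1 else 0)"
proof -
  have fin: "finite {m. m < N \<and> Q m}" by simp
  show ?thesis
  proof (cases "Q N")
    case True
    then have "{m. m < Suc N \<and> Q m} = insert N {m. m < N \<and> Q m}" by auto
    then show ?thesis using True fin by simp
  next
    case False
    then have "{m. m < Suc N \<and> Q m} = {m. m < N \<and> Q m}" using less_Suc_eq by auto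
    then show ?thesis using False by simp
  qed
qed

lemma cnt: "card {m. m < N \<and> m div 2 ^ j mod 2 = 0} + card {m. m < N \<and> m div 2 ^ j mod 2 = 1} = N
  \<and> int (card {m. m < N \<and> m div 2 ^ j mod 2 = 0}) - int (card {m. m < N \<and> m div 2 ^ j mod 2 = 1}) = d (Suc j) N"
proof (induction N)
  case 0
  then show ?case by (simp add: d_def)
next
  case (Suc N)
  have "N div 2 ^ j mod 2 = 0 \<or> N div 2 ^ j mod 2 = 1" by auto
  then show ?case using Suc d_step[of j N]
    unfolding card_suc[of N "\<lambda>m. m div 2 ^ j mod 2 = 0"] card_suc[of N "\<lambda>m. m div 2 ^ j mod 2 = 1"]
    by auto
qed

lemma beta_nth: "1 \<le> i \<Longrightarrow> i \<le> k \<Longrightarrow> beta k m ! (i - 1) = m div 2 ^ (k - i) mod 2"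
proof -
  assume i: "1 \<le> i" "i \<le> k"
  have "[1..<k + 1] ! (i - 1) = i" using i by (subst nth_upt) auto
  moreover have "i - 1 < length [1..<k + 1]" using i by simp
  ultimately show ?thesis unfolding beta_def by (simp only: nth_map)
qed

lemma h_c: "n \<ge> 1 \<Longrightarrow> h n = c n - 1"
proof -
  assume n1: "n \<ge> 1"
  show ?thesis
  proof (cases "n = 1")
    case True
    have "Sd (int n) = {1}" using Sd_pow[of 0] True by simp
    then show ?thesis using True unfolding h_def c_Sd by simp
  next
    case False
    then have n2: "n \<ge> 2" using n1 by simp
    define k where "k = kdim n"
    have kc: "k = ceillog2 n" unfolding k_def kdim_def ceillog2_def using n2 by simp
    have nk: "n \<le> 2 ^ k" unfolding kc by (rule le_two_power_ceillog2)
    have k1: "k \<ge> 1" unfolding kc using ceillog2_ge_iff[of n 1] n2 by simp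
    define Z where "Z = (\<lambda>j. card {m. m < n \<and> m div 2 ^ j mod 2 = 0})"
    define Oc where "Oc = (\<lambda>j. card {m. m < n \<and> m div 2 ^ j mod 2 = 1})"
    have ZO: "Z j + Oc j = n" "int (Z j) - int (Oc j) = dd (Suc j) (int n)" for j
      using cnt[of n j] unfolding Z_def Oc_def d_dd by auto
    have ZgeO: "Z j \<ge> Oc j" for j using ZO(2)[of j] dd_nonneg[of "Suc j" "int n"] by simp
    define J where "J = {j. j < k \<and> Oc j \<ge> 1}"
    have HC: "{p. is_HCBP n p} = (\<lambda>j. (Z j, Oc j)) ` J"
    proof (intro equalityI subsetI)
      fix p assume "p \<in> {p. is_HCBP n p}"
      then obtain n0 n1 where p: "p = (n0, n1)" and hp: "is_HCBP n (n0, n1)" by (cases p) auto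
      from hp obtain i where i: "i \<in> {1..k}" and nn: "n = n0 + n1" "n0 \<ge> n1" "n1 \<ge> 1"
        and AB: "(n0 = Z (k - i) \<and> n1 = Oc (k - i)) \<or> (n0 = Oc (k - i) \<and> n1 = Z (k - i))"
      proof -
        from hp have "n = n0 + n1" "n0 \<ge> n1" "n1 \<ge> 1" and
          "\<exists>i \<in> {1..k}. (let A = card {m. m < n \<and> beta k m ! (i - 1) = 0};
             B = card {m. m < n \<and> beta k m ! (i - 1) = 1}
             in (n0 = A \<and> n1 = B) \<or> (n0 = B \<and> n1 = A))"
          unfolding is_HCBP_def k_def by auto
        then obtain i where i: "i \<in> {1..k}" and L: "(let A = card {m. m < n \<and> beta k m ! (i - 1) = 0};
             B = card {m. m < n \<and> beta k m ! (i - 1) = 1}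
             in (n0 = A \<and> n1 = B) \<or> (n0 = B \<and> n1 = A))" by blast
        have e0: "{m. m < n \<and> beta k m ! (i - 1) = 0} = {m. m < n \<and> m div 2 ^ (k - i) mod 2 = 0}"
          using beta_nth i by auto
        have e1: "{m. m < n \<and> beta k m ! (i - 1) = 1} = {m. m < n \<and> m div 2 ^ (k - i) mod 2 = 1}"
          using beta_nth i by auto
        from L have "(n0 = Z (k - i) \<and> n1 = Oc (k - i)) \<or> (n0 = Oc (k - i) \<and> n1 = Z (k - i))"
          unfolding Let_def e0 e1 Z_def Oc_def .
        then show ?thesis using that i \<open>n = n0 + n1\<close> \<open>n0 \<ge> n1\<close> \<open>n1 \<ge> 1\<close> by blast
      qed
      have "n0 = Z (k - i) \<and> n1 = Oc (k - i)" using AB ZgeO[of "k - i"] nn by auto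
      moreover have "k - i \<in> J" unfolding J_def using i calculation nn by auto
      ultimately show "p \<in> (\<lambda>j. (Z j, Oc j)) ` J" unfolding p by auto
    next
      fix p assume "p \<in> (\<lambda>j. (Z j, Oc j)) ` J"
      then obtain j where j: "j < k" "Oc j \<ge> 1" and p: "p = (Z j, Oc j)" unfolding J_def by auto
      define i where "i = k - j"
      have i: "i \<in> {1..k}" "k - i = j" using j unfolding i_def by auto
      have e0: "{m. m < n \<and> beta k m ! (i - 1) = 0} = {m. m < n \<and> m div 2 ^ j mod 2 = 0}"
        using beta_nth i by auto
      have e1: "{m. m < n \<and> beta k m ! (i - 1) = 1} = {m. m < n \<and> m div 2 ^ j mod 2 = 1}"
        using beta_nth i by auto
      have L: "let A = card {m. m < n \<and> beta k m ! (i - 1) = 0};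
             B = card {m. m < n \<and> beta k m ! (i - 1) = 1}
             in (Z j = A \<and> Oc j = B) \<or> (Z j = B \<and> Oc j = A)"
        unfolding Let_def e0 e1 Z_def Oc_def by simp
      have "is_HCBP n (Z j, Oc j)"
        unfolding is_HCBP_def k_def[symmetric] prod.case
        using ZO(1)[of j] ZgeO[of j] j(2) i(1) L by blast
      then show "p \<in> {p. is_HCBP n p}" using p by simp
    qed
    define g where "g = (\<lambda>p::nat \<times> nat. int (fst p) - int (snd p))"
    have inj: "inj_on g ((\<lambda>j. (Z j, Oc j)) ` J)"
    proof (rule inj_onI)
      fix p q assume "p \<in> (\<lambda>j. (Z j, Oc j)) ` J" "q \<in> (\<lambda>j. (Z j, Oc j)) ` J" "g p = g q"
      then obtain j j' where "p = (Z j, Oc j)" "q = (Z j', Oc j')" "g p = g q" by blast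
      then show "p = q" unfolding g_def using ZO(1)[of j] ZO(1)[of j'] by simp
    qed
    have img: "g ` ((\<lambda>j. (Z j, Oc j)) ` J) = Sd (int n) - {int n}"
    proof (intro equalityI subsetI)
      fix y assume "y \<in> g ` ((\<lambda>j. (Z j, Oc j)) ` J)"
      then obtain j where j0: "j \<in> J" "y = g (Z j, Oc j)" by blast
      then have j: "j \<in> J" "y = dd (Suc j) (int n)" unfolding g_def using ZO(2)[of j] by simp_all
      have "y \<noteq> int n" using j ZO[of j] unfolding J_def by auto
      then show "y \<in> Sd (int n) - {int n}" using Sd_mem[of "Suc j" "int n"] j by auto
    next
      fix y assume y: "y \<in> Sd (int n) - {int n}"
      then obtain i where i: "i \<ge> 1" "y = dd i (int n)" "y \<noteq> int n" unfolding Sd_def by auto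
      have ik: "i \<le> k"
      proof (rule ccontr)
        assume "\<not> i \<le> k"
        then have "(2::int) ^ k \<le> 2 ^ (i - 1)" by (intro power_increasing) auto
        moreover have "int n \<le> 2 ^ k" using nk by (metis of_nat_le_iff of_nat_numeral of_nat_power)
        ultimately have "int n \<le> 2 ^ (i - 1)" by linarith
        then have "dd i (int n) = int n" using dd_small[of "int n" i] i(1) by simp
        then show False using i by simp
      qed
      define j where "j = i - 1"
      have j: "Suc j = i" "j < k" using i ik unfolding j_def by auto
      have "Oc j \<ge> 1" using ZO[of j] i j by (cases "Oc j") auto
      then have "j \<in> J" using j unfolding J_def by auto
      moreover have "y = g (Z j, Oc j)" unfolding g_def using ZO[of j] i j by simp
      ultimately show "y \<in> g ` ((\<lambda>j. (Z j, Oc j)) ` J)" by blast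
    qed
    have mem: "int n \<in> Sd (int n)"
    proof -
      have "(int n) \<le> 2 ^ (Suc k - 1)" using nk by (metis diff_Suc_1 of_nat_le_iff of_nat_numeral of_nat_power)
      then have "dd (Suc k) (int n) = int n" using dd_small[of "int n" "Suc k"] by simp
      then show ?thesis using Sd_mem[of "Suc k" "int n"] by simp
    qed
    have fin: "finite (Sd (int n))" using Sd_fin[of "int n"] by simp
    have "h n = card {p. is_HCBP n p}" unfolding h_def using n2 by simp
    also have "\<dots> = card (g ` ((\<lambda>j. (Z j, Oc j)) ` J))" unfolding HC using card_image[OF inj] by simp
    also have "\<dots> = card (Sd (int n)) - 1" unfolding img using mem fin by simp
    finally show ?thesis unfolding c_Sd .
  qed
qed

theorem theorem20:
  fixes n l :: nat and a :: "nat \<Rightarrow> nat"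
  assumes "n \<ge> 1" and "is_ABR n l a"
  shows "(odd n \<longrightarrow> c n = l \<and> h n = l - 1) \<and> (even n \<longrightarrow> c n = l + 1 \<and> h n = l)"
proof -
  have l1: "l \<ge> 1" and ab: "abr l a" and v: "int n = vl l a"
    using assms(2) unfolding is_ABR_def abr_def vl_def by auto
  obtain m where m: "l = Suc m" using l1 by (cases l) auto
  have M: "(even (vl l a) \<longleftrightarrow> a l \<ge> 1) \<and> card (Sd (vl l a)) = (if a l = 0 then l else Suc l)"
    using main[of m a] ab unfolding m by auto
  have ev: "even n \<longleftrightarrow> a l \<ge> 1" using M v by (metis even_of_nat)
  have cc: "c n = (if a l = 0 then l else Suc l)" using M v unfolding c_Sd by simp
  have hh: "h n = c n - 1" using h_c assms(1) by simp
  show ?thesis using ev cc hh by auto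
qed

end
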